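(* Let $\alpha,\beta,\bar\beta,\Delta,\bar\Delta\in\mathbb{C}$ with $(\Delta,\beta)\neq(0,0)$, $(\bar\Delta,\bar\beta)\neq(0,0)$ and $\bar\beta-\beta=1$. Consider extensions of conformal $\widetilde{\mathrm{SV}}$-modules $$0\to V(\alpha,\bar\beta,\bar\Delta)\to E\to V(\alpha,\beta,\Delta)\to0,$$ realized as $E=\mathbb{C}[\partial]v_{\bar\Delta}\oplus\mathbb{C}[\partial]v_\Delta$ with $\mathbb{C}[\partial]v_{\bar\Delta}\cong V(\alpha,\bar\beta,\bar\Delta)$ a submodule and $$L_\lambda v_\Delta=(\partial+\alpha+\Delta\lambda)v_\Delta+f(\partial,\lambda)v_{\bar\Delta},\ M_\lambda v_\Delta=g(\partial,\lambda)v_{\bar\Delta},\ N_\lambda v_\Delta=\beta v_\Delta+k(\partial,\lambda)v_{\bar\Delta},\ Y_\lambda v_\Delta=h(\partial,\lambda)v_{\bar\Delta},$$ with $f,g,h,k\in\mathbb{C}[\partial,\lambda]$. Nontrivial extensions of this form exist if and only if $\Delta-\bar\Delta=-\tfrac12$ or $(\Delta,\bar\Delta)=(\tfrac{\bar\beta+1}2,\tfrac{\bar\beta}2)$. In these cases they are given, up to equivalence, as follows (with $\bar\partial=\partial+\alpha$): (i) $\Delta-\bar\Delta=-\tfrac12$: $f=g=k=0$ and $h=a_0$ with $a_0\neq0$; (ii) $(\Delta,\bar\Delta)=(\tfrac{\bar\beta+1}2,\tfrac{\bar\beta}2)$: $f=g=k=0$ and $h=a_1(\bar\partial+\bar\beta\lambda)$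 with $a_1\neq0$. Furthermore, $\mathrm{Ext}(V(\alpha,\beta,\Delta),V(\alpha,\beta+1,\bar\Delta))$ is $1$-dimensional in cases (i) and (ii).
   Context: A conformal module over a Lie conformal algebra $R$ is a $\mathbb{C}[\partial]$-module $V$ with $a\mapsto a_\lambda\in\mathrm{End}_{\mathbb{C}}(V)\otimes\mathbb{C}[\lambda]$ satisfying $[a_\lambda,b_\mu]=[a_\lambda b]_{\lambda+\mu}$ and $(\partial a)_\lambda=[\partial,a_\lambda]=-\lambda a_\lambda$. $\widetilde{\mathrm{SV}}$ is the Lie conformal algebra that is the free $\mathbb{C}[\partial]$-module with basis $L,M,Y,N$ whose nonzero $\lambda$-brackets (up to skew-symmetry) are $[L_\lambda L]=(\partial+2\lambda)L$, $[L_\lambda Y]=(\partial+\tfrac32\lambda)Y$, $[L_\lambda M]=(\partial+\lambda)M$, $[Y_\lambda Y]=(\partial+2\lambda)M$, $[L_\lambda N]=(\partial+\lambda)N$, $[N_\lambda M]=2M$, $[N_\lambda Y]=Y$. $V(\alpha,\beta,\Delta)=\mathbb{C}[\partial]v_\Delta$ with $L_\lambda v_\Delta=(\partial+\alpha+\Delta\lambda)v_\Delta$, $N_\lambda v_\Delta=\beta v_\Delta$, $M_\lambda v_\Delta=Y_\lambda v_\Delta=0$. An extension of $W$ by $V$ is an exact sequence $0\to V\to E\to W\to0$ of conformal modules; equivalence via a module map of middle terms compatible with identities; trivial means equivalent to the direct sum. $\mathrm{Ext}(W,V)$ is the space of extension cocycles modulo coboundaries. *)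

theory Defs
  imports "HOL-Computational_Algebra.Polynomial"
begin

text \<open>Generators of the Lie conformal algebra SV-tilde (a free C[d]-module with basis L, M, Y, N).\<close>
datatype gen = L | M | N | Y

text \<open>A polynomial in two variables (d, lambda) enters the lambda-action only through evaluation
  of d at a scalar (rule (d a)_nu = - nu a_nu), so the structure polynomials of the lambda-brackets
  are recorded as functions of (d, lambda).  The table lists the given nonzero brackets
  [a_lambda b] = sum_c p_c(d, lambda) c.\<close>
fun sv_table :: "gen \<Rightarrow> gen \<Rightarrow> (gen \<Rightarrow> complex \<Rightarrow> complex \<Rightarrow> complex) option" where
  "sv_table L L = Some (\<lambda>c d l. if c = L then d + 2 * l else 0)"
| "sv_table L Y = Some (\<lambda>c d l. if c = Y then d + 3/2 * l else 0)"
| "sv_table L M = Some (\<lambda>c d l. if c = M then d + l else 0)"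
| "sv_table Y Y = Some (\<lambda>c d l. if c = M then d + 2 * l else 0)"
| "sv_table L N = Some (\<lambda>c d l. if c = N then d + l else 0)"
| "sv_table N M = Some (\<lambda>c d l. if c = M then 2 else 0)"
| "sv_table N Y = Some (\<lambda>c d l. if c = Y then 1 else 0)"
| "sv_table _ _ = None"

text \<open>Full lambda-bracket coefficients, completed by skew-symmetry
  [b_lambda a] = - [a_{-lambda-d} b]; all other brackets vanish.\<close>
definition sv_bracket :: "gen \<Rightarrow> gen \<Rightarrow> gen \<Rightarrow> complex \<Rightarrow> complex \<Rightarrow> complex" where
  "sv_bracket a b c d l =
     (case sv_table a b of Some p \<Rightarrow> p c d l
      | None \<Rightarrow> (case sv_table b a of Some p \<Rightarrow> - p c d (- l - d) | None \<Rightarrow> 0))"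

text \<open>Elements of E = C[d] vbar (+) C[d] v are pairs (pbar, p) meaning pbar(d) vbar + p(d) v.\<close>
type_synonym elt = "complex poly \<times> complex poly"

definition eadd :: "elt \<Rightarrow> elt \<Rightarrow> elt" where
  "eadd x y = (fst x + fst y, snd x + snd y)"

definition escale :: "complex poly \<Rightarrow> elt \<Rightarrow> elt" where
  "escale r x = (r * fst x, r * snd x)"

definition shift :: "complex \<Rightarrow> complex poly \<Rightarrow> complex poly" where
  "shift lam p = pcompose p [:lam, 1:]"

text \<open>Polynomials F in C[d, lambda] are represented as complex poly poly, the outer variable being
  lambda and the coefficients polynomials in d; evl F lam = F(d, lam).\<close>
definition evl :: "complex poly poly \<Rightarrow> complex \<Rightarrow> complex poly" where
  "evl F lam = poly F [:lam:]"

text \<open>Action on the rank-one module V(alpha, beta, Delta): X_lambda v = (coefficient) v.\<close>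
fun vcoef :: "complex \<Rightarrow> complex \<Rightarrow> complex \<Rightarrow> gen \<Rightarrow> complex \<Rightarrow> complex poly" where
  "vcoef alpha beta Delta L lam = [:alpha + Delta * lam, 1:]"
| "vcoef alpha beta Delta N lam = [:beta:]"
| "vcoef alpha beta Delta M lam = 0"
| "vcoef alpha beta Delta Y lam = 0"

text \<open>Cochain data: c L = f, c M = g, c N = k, c Y = h.\<close>
type_synonym cochain = "gen \<Rightarrow> complex poly poly"

text \<open>The lambda-action (at a scalar value lambda) on E, with C[d] vbar = V(alpha, betab, Deltab)
  and quotient V(alpha, beta, Delta), using a_lambda (p(d) e) = p(d+lambda) a_lambda e.\<close>
definition ext_act :: "complex \<Rightarrow> complex \<Rightarrow> complex \<Rightarrow> complex \<Rightarrow> complex \<Rightarrow> cochain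
    \<Rightarrow> gen \<Rightarrow> complex \<Rightarrow> elt \<Rightarrow> elt" where
  "ext_act alpha betab Deltab beta Delta c X lam e =
     (shift lam (fst e) * vcoef alpha betab Deltab X lam + shift lam (snd e) * evl (c X) lam,
      shift lam (snd e) * vcoef alpha beta Delta X lam)"

text \<open>Conformal module axioms for an action on E (lambda-brackets compared at all scalar values
  lambda, mu, which is equivalent to polynomial identity).\<close>
definition conformal_module :: "(gen \<Rightarrow> complex \<Rightarrow> elt \<Rightarrow> elt) \<Rightarrow> bool" where
  "conformal_module act \<longleftrightarrow>
     (\<forall>a lam x y. act a lam (eadd x y) = eadd (act a lam x) (act a lam y)) \<and>
     (\<forall>a lam r x. act a lam (escale r x) = escale (shift lam r) (act a lam x)) \<and>
     (\<forall>a b lam mu x.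
        fst (act a lam (act b mu x)) - fst (act b mu (act a lam x)) =
          (\<Sum>c\<leftarrow>[L, M, N, Y]. smult (sv_bracket a b c (- (lam + mu)) lam) (fst (act c (lam + mu) x))) \<and>
        snd (act a lam (act b mu x)) - snd (act b mu (act a lam x)) =
          (\<Sum>c\<leftarrow>[L, M, N, Y]. smult (sv_bracket a b c (- (lam + mu)) lam) (snd (act c (lam + mu) x))))"

definition ext_equiv :: "(gen \<Rightarrow> complex \<Rightarrow> elt \<Rightarrow> elt) \<Rightarrow> (gen \<Rightarrow> complex \<Rightarrow> elt \<Rightarrow> elt) \<Rightarrow> bool" where
  "ext_equiv act1 act2 \<longleftrightarrow>
     (\<exists>phi :: elt \<Rightarrow> elt.
        (\<forall>x y. phi (eadd x y) = eadd (phi x) (phi y)) \<and>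
        (\<forall>r x. phi (escale r x) = escale r (phi x)) \<and>
        (\<forall>p. phi (p, 0) = (p, 0)) \<and>
        (\<forall>x. snd (phi x) = snd x) \<and>
        (\<forall>a lam x. phi (act1 a lam x) = act2 a lam (phi x)))"

definition is_cocycle :: "complex \<Rightarrow> complex \<Rightarrow> complex \<Rightarrow> complex \<Rightarrow> complex \<Rightarrow> cochain \<Rightarrow> bool" where
  "is_cocycle alpha betab Deltab beta Delta c \<longleftrightarrow>
     conformal_module (ext_act alpha betab Deltab beta Delta c)"

definition is_coboundary :: "complex \<Rightarrow> complex \<Rightarrow> complex \<Rightarrow> complex \<Rightarrow> complex \<Rightarrow> cochain \<Rightarrow> bool" where
  "is_coboundary alpha betab Deltab beta Delta c \<longleftrightarrow>
     is_cocycle alpha betab Deltab beta Delta c \<and>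
     ext_equiv (ext_act alpha betab Deltab beta Delta c) (ext_act alpha betab Deltab beta Delta (\<lambda>_. 0))"

definition nontrivial_ext :: "complex \<Rightarrow> complex \<Rightarrow> complex \<Rightarrow> complex \<Rightarrow> complex \<Rightarrow> cochain \<Rightarrow> bool" where
  "nontrivial_ext alpha betab Deltab beta Delta c \<longleftrightarrow>
     is_cocycle alpha betab Deltab beta Delta c \<and> \<not> is_coboundary alpha betab Deltab beta Delta c"

definition equiv_ext :: "complex \<Rightarrow> complex \<Rightarrow> complex \<Rightarrow> complex \<Rightarrow> complex \<Rightarrow> cochain \<Rightarrow> cochain \<Rightarrow> bool" where
  "equiv_ext alpha betab Deltab beta Delta c c' \<longleftrightarrow>
     ext_equiv (ext_act alpha betab Deltab beta Delta c) (ext_act alpha betab Deltab beta Delta c')"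

definition ext_dim_one :: "complex \<Rightarrow> complex \<Rightarrow> complex \<Rightarrow> complex \<Rightarrow> complex \<Rightarrow> bool" where
  "ext_dim_one alpha betab Deltab beta Delta \<longleftrightarrow>
     (\<exists>c0. is_cocycle alpha betab Deltab beta Delta c0 \<and> \<not> is_coboundary alpha betab Deltab beta Delta c0 \<and>
        (\<forall>c. is_cocycle alpha betab Deltab beta Delta c \<longrightarrow>
           (\<exists>t::complex. is_coboundary alpha betab Deltab beta Delta (\<lambda>X. c X - smult [:t:] (c0 X)))))"

definition data_i :: "complex \<Rightarrow> cochain" where
  "data_i a0 = (\<lambda>X. if X = Y then [:[:a0:]:] else 0)"

definition data_ii :: "complex \<Rightarrow> complex \<Rightarrow> complex \<Rightarrow> cochain" where
  "data_ii alpha betab a1 = (\<lambda>X. if X = Y then [: [:a1 * alpha, a1:], [:a1 * betab:] :] else 0)"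

end

theory Submission
  imports Defs
begin


definition CC :: "cochain \<Rightarrow> gen \<Rightarrow> complex \<Rightarrow> complex \<Rightarrow> complex" where
  "CC c X l z = poly (evl (c X) l) z"
definition VC :: "complex \<Rightarrow> complex \<Rightarrow> complex \<Rightarrow> gen \<Rightarrow> complex \<Rightarrow> complex \<Rightarrow> complex" where
  "VC al be De X l z = poly (vcoef al be De X l) z"

lemma VC_simps[simp]: "VC al be De L l z = z + al + De * l" "VC al be De N l z = be"
  "VC al be De M l z = 0" "VC al be De Y l z = 0"
  by (simp_all add: VC_def)

lemma poly_fst_act: "poly (fst (ext_act al bb Db be De c X l e)) z =
   poly (fst e) (z+l) * VC al bb Db X l z + poly (snd e) (z+l) * CC c X l z"
  by (simp add: ext_act_def shift_def poly_pcompose VC_def CC_def add.commute)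

lemma poly_snd_act: "poly (snd (ext_act al bb Db be De c X l e)) z =
   poly (snd e) (z+l) * VC al be De X l z"
  by (simp add: ext_act_def shift_def poly_pcompose VC_def CC_def add.commute)

definition SB :: "gen \<Rightarrow> gen \<Rightarrow> gen \<Rightarrow> complex \<Rightarrow> complex \<Rightarrow> complex" where
  "SB a b x l m = sv_bracket a b x (- (l + m)) l"

lemma modV: "VC al be De b m (z+l) * VC al be De a l z - VC al be De a l (z+m) * VC al be De b m z
   = SB a b L l m * VC al be De L (l+m) z + SB a b M l m * VC al be De M (l+m) z
   + SB a b N l m * VC al be De N (l+m) z + SB a b Y l m * VC al be De Y (l+m) z"
  by (cases a; cases b; simp add: SB_def sv_bracket_def algebra_simps)

definition CondPt where
  "CondPt al bb Db be De c a b l m z \<longleftrightarrow>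
   CC c b m (z+l) * VC al bb Db a l z + VC al be De b m (z+l) * CC c a l z
   - (CC c a l (z+m) * VC al bb Db b m z + VC al be De a l (z+m) * CC c b m z)
   = SB a b L l m * CC c L (l+m) z + SB a b M l m * CC c M (l+m) z
   + SB a b N l m * CC c N (l+m) z + SB a b Y l m * CC c Y (l+m) z"

lemma poly_sumlist4: "poly (\<Sum>x\<leftarrow>[L, M, N, Y]. smult (f x) (g x)) z =
  f L * poly (g L) z + f M * poly (g M) z + f N * poly (g N) z + f Y * poly (g Y) z"
  by (simp add: algebra_simps)

lemma cocycle_iff: "is_cocycle al bb Db be De c \<longleftrightarrow> (\<forall>a b l m z. CondPt al bb Db be De c a b l m z)"
proof
  assume H: "\<forall>a b l m z. CondPt al bb Db be De c a b l m z"
  let ?A = "ext_act al bb Db be De c"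
  have add: "\<forall>a lam x y. ?A a lam (eadd x y) = eadd (?A a lam x) (?A a lam y)"
    by (simp add: ext_act_def eadd_def shift_def pcompose_add algebra_simps)
  have sc: "\<forall>a lam r x. ?A a lam (escale r x) = escale (shift lam r) (?A a lam x)"
    by (simp add: ext_act_def escale_def shift_def pcompose_mult algebra_simps)
  have br: "fst (?A a lam (?A b mu x)) - fst (?A b mu (?A a lam x)) =
          (\<Sum>c\<leftarrow>[L, M, N, Y]. smult (sv_bracket a b c (- (lam + mu)) lam) (fst (?A c (lam + mu) x))) \<and>
        snd (?A a lam (?A b mu x)) - snd (?A b mu (?A a lam x)) =
          (\<Sum>c\<leftarrow>[L, M, N, Y]. smult (sv_bracket a b c (- (lam + mu)) lam) (snd (?A c (lam + mu) x)))"
    for a b lam mu x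
  proof
    show "fst (?A a lam (?A b mu x)) - fst (?A b mu (?A a lam x)) =
          (\<Sum>c\<leftarrow>[L, M, N, Y]. smult (sv_bracket a b c (- (lam + mu)) lam) (fst (?A c (lam + mu) x)))"
    proof (rule poly_eq_poly_eq_iff[THEN iffD1], rule ext)
      fix z
      have e1: "CondPt al bb Db be De c a b lam mu z" using H by blast
      note e2 = modV[where al=al and be=bb and De=Db and a=a and b=b and l=lam and m=mu and z=z]
      show "poly (fst (?A a lam (?A b mu x)) - fst (?A b mu (?A a lam x))) z =
        poly (\<Sum>c\<leftarrow>[L, M, N, Y]. smult (sv_bracket a b c (- (lam + mu)) lam) (fst (?A c (lam + mu) x))) z"
        apply (simp only: poly_sumlist4 poly_diff poly_fst_act poly_snd_act flip: SB_def)
        apply (simp only: add.assoc add.commute[of mu lam])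
        using e1 e2 unfolding CondPt_def by algebra
    qed
    show "snd (?A a lam (?A b mu x)) - snd (?A b mu (?A a lam x)) =
          (\<Sum>c\<leftarrow>[L, M, N, Y]. smult (sv_bracket a b c (- (lam + mu)) lam) (snd (?A c (lam + mu) x)))"
    proof (rule poly_eq_poly_eq_iff[THEN iffD1], rule ext)
      fix z
      note e2 = modV[where al=al and be=be and De=De and a=a and b=b and l=lam and m=mu and z=z]
      show "poly (snd (?A a lam (?A b mu x)) - snd (?A b mu (?A a lam x))) z =
        poly (\<Sum>c\<leftarrow>[L, M, N, Y]. smult (sv_bracket a b c (- (lam + mu)) lam) (snd (?A c (lam + mu) x))) z"
        apply (simp only: poly_sumlist4 poly_diff poly_fst_act poly_snd_act flip: SB_def)
        apply (simp only: add.assoc add.commute[of mu lam])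
        using e2 by algebra
    qed
  qed
  show "is_cocycle al bb Db be De c"
    unfolding is_cocycle_def conformal_module_def using add sc br by blast
next
  assume "is_cocycle al bb Db be De c"
  show "\<forall>a b l m z. CondPt al bb Db be De c a b l m z"
  proof (intro allI)
    fix a b l m z
    let ?A = "ext_act al bb Db be De c"
    have "fst (?A a l (?A b m (0,1))) - fst (?A b m (?A a l (0,1))) =
          (\<Sum>x\<leftarrow>[L, M, N, Y]. smult (sv_bracket a b x (- (l + m)) l) (fst (?A x (l + m) (0,1))))"
      using \<open>is_cocycle al bb Db be De c\<close> unfolding is_cocycle_def conformal_module_def by blast
    then have "poly (fst (?A a l (?A b m (0,1))) - fst (?A b m (?A a l (0,1)))) z =
          poly (\<Sum>x\<leftarrow>[L, M, N, Y]. smult (sv_bracket a b x (- (l + m)) l) (fst (?A x (l + m) (0,1)))) z"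
      by simp
    then show "CondPt al bb Db be De c a b l m z"
      unfolding CondPt_def
      by (simp only: poly_sumlist4 poly_diff poly_fst_act poly_snd_act fst_conv snd_conv poly_0 poly_1
          mult_zero_left mult_1_left add_0_left flip: SB_def)
  qed
qed

definition Cob where
  "Cob al bb Db be De c c' \<longleftrightarrow> (\<exists>q. \<forall>X l z. CC c X l z - CC c' X l z =
      poly q (z+l) * VC al bb Db X l z - VC al be De X l z * poly q z)"

lemma equiv_iff: "ext_equiv (ext_act al bb Db be De c) (ext_act al bb Db be De c') \<longleftrightarrow> Cob al bb Db be De c c'"
proof
  assume "ext_equiv (ext_act al bb Db be De c) (ext_act al bb Db be De c')"
  then obtain phi :: "elt \<Rightarrow> elt" where
    p1: "\<forall>x y. phi (eadd x y) = eadd (phi x) (phi y)" and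
    p2: "\<forall>r x. phi (escale r x) = escale r (phi x)" and
    p3: "\<forall>p. phi (p, 0) = (p, 0)" and
    p4: "\<forall>x. snd (phi x) = snd x" and
    p5: "\<forall>a lam x. phi (ext_act al bb Db be De c a lam x) = ext_act al bb Db be De c' a lam (phi x)"
    unfolding ext_equiv_def by blast
  define q where "q = fst (phi (0,1))"
  have phi01: "phi (0,1) = (q,1)" using p4[rule_format, of "(0,1)"] q_def by (cases "phi (0,1)") auto
  have phig: "phi (pb, p) = (pb + p * q, p)" for pb p
  proof -
    have "(pb, p) = eadd (pb, 0) (escale p (0,1))" by (simp add: eadd_def escale_def)
    then have "phi (pb, p) = eadd (phi (pb, 0)) (escale p (phi (0,1)))" using p1 p2 by metis
    then show ?thesis using p3 phi01 by (simp add: eadd_def escale_def)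
  qed
  show "Cob al bb Db be De c c'"
    unfolding Cob_def
  proof (intro exI allI)
    fix X l z
    have "phi (ext_act al bb Db be De c X l (0,1)) = ext_act al bb Db be De c' X l (phi (0,1))"
      using p5 by blast
    then have "fst (phi (ext_act al bb Db be De c X l (0,1))) = fst (ext_act al bb Db be De c' X l (q,1))"
      using phi01 by simp
    then have "poly (fst (phi (ext_act al bb Db be De c X l (0,1)))) z = poly (fst (ext_act al bb Db be De c' X l (q,1))) z"
      by simp
    moreover have "fst (phi (ext_act al bb Db be De c X l (0,1))) = fst (ext_act al bb Db be De c X l (0,1))
       + snd (ext_act al bb Db be De c X l (0,1)) * q"
      using phig[of "fst (ext_act al bb Db be De c X l (0,1))" "snd (ext_act al bb Db be De c X l (0,1))"]
      by simp
    ultimately have "poly (fst (ext_act al bb Db be De c X l (0,1))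
       + snd (ext_act al bb Db be De c X l (0,1)) * q) z = poly (fst (ext_act al bb Db be De c' X l (q,1))) z"
      by simp
    then have "CC c X l z + VC al be De X l z * poly q z = poly q (z+l) * VC al bb Db X l z + CC c' X l z"
      by (simp only: poly_add poly_mult poly_fst_act poly_snd_act fst_conv snd_conv poly_0 poly_1
          mult_zero_left mult_1_left add_0_left)
    then show "CC c X l z - CC c' X l z = poly q (z+l) * VC al bb Db X l z - VC al be De X l z * poly q z"
      by (simp add: algebra_simps)
  qed
next
  assume "Cob al bb Db be De c c'"
  then obtain q where hq: "\<And>X l z. CC c X l z - CC c' X l z =
      poly q (z+l) * VC al bb Db X l z - VC al be De X l z * poly q z" unfolding Cob_def by blast
  define phi :: "elt \<Rightarrow> elt" where "phi x = (fst x + snd x * q, snd x)" for x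
  have "phi (ext_act al bb Db be De c a lam x) = ext_act al bb Db be De c' a lam (phi x)" for a lam x
  proof -
    have "poly (fst (phi (ext_act al bb Db be De c a lam x))) z = poly (fst (ext_act al bb Db be De c' a lam (phi x))) z" for z
    proof -
      have "poly (fst (phi (ext_act al bb Db be De c a lam x))) z =
        poly (fst x) (z + lam) * VC al bb Db a lam z + poly (snd x) (z + lam) * CC c a lam z
        + poly (snd x) (z + lam) * VC al be De a lam z * poly q z"
        by (simp add: phi_def poly_fst_act poly_snd_act)
      moreover have "poly (fst (ext_act al bb Db be De c' a lam (phi x))) z =
        (poly (fst x) (z + lam) + poly (snd x) (z+lam) * poly q (z+lam)) * VC al bb Db a lam z
         + poly (snd x) (z + lam) * CC c' a lam z"
        by (simp add: phi_def poly_fst_act poly_snd_act)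
      ultimately show ?thesis using hq[of a lam z] by algebra
    qed
    then have "fst (phi (ext_act al bb Db be De c a lam x)) = fst (ext_act al bb Db be De c' a lam (phi x))"
      using poly_eq_poly_eq_iff by blast
    moreover have "snd (phi (ext_act al bb Db be De c a lam x)) = snd (ext_act al bb Db be De c' a lam (phi x))"
      by (simp add: phi_def ext_act_def)
    ultimately show ?thesis by (simp add: prod_eq_iff)
  qed
  then show "ext_equiv (ext_act al bb Db be De c) (ext_act al bb Db be De c')"
    unfolding ext_equiv_def
    apply (rule_tac x=phi in exI)
    by (simp add: phi_def eadd_def escale_def algebra_simps)
qed

lemma poly_const_off_point:
  fixes g :: "complex poly"
  assumes "\<And>s. s \<noteq> p \<Longrightarrow> poly g s = g0"
  shows "poly g s = g0"
proof -
  have "g - [:g0:] = 0"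
  proof (rule ccontr)
    assume ne: "g - [:g0:] \<noteq> 0"
    have "UNIV - {p} \<subseteq> {x. poly (g - [:g0:]) x = 0}" using assms by auto
    moreover have "infinite (UNIV - {p} :: complex set)"
      by (simp add: infinite_UNIV_char_0)
    ultimately show False using poly_roots_finite[OF ne] finite_subset by blast
  qed
  then have "g = [:g0:]" by simp
  then show ?thesis by simp
qed

lemma G_analysis:
  fixes g :: "complex poly" and al c1 c2 :: complex
  assumes eq: "\<And>z l. poly g (z+l) * (z+al+c1*l) = poly g z * (z+al+c2*l)"
  shows "\<exists>a0 a1. (\<forall>s. poly g s = a0 + a1 * (s + al)) \<and> (a0 \<noteq> 0 \<longrightarrow> c1 = c2) \<and> (a1 \<noteq> 0 \<longrightarrow> c1 = 0 \<and> c2 = 1)"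
proof (cases "c1 = 0")
  case False
  define g0 where "g0 = c2 * poly g (-al) / c1"
  have Gne: "poly g s = g0" if "s \<noteq> -al" for s
  proof -
    have "poly g s * (c1 * (s + al)) = poly g (-al) * (c2 * (s+al))"
      using eq[of "-al" "s+al"] by (simp add: algebra_simps)
    then have "(poly g s * c1) * (s + al) = (poly g (-al) * c2) * (s+al)" by (simp add: ac_simps)
    moreover have "s + al \<noteq> 0" using that by (simp add: eq_neg_iff_add_eq_0[symmetric])
    ultimately have "poly g s * c1 = poly g (-al) * c2" by simp
    then show ?thesis using False unfolding g0_def by (simp add: field_simps)
  qed
  have G: "poly g s = g0" for s by (rule poly_const_off_point[of "-al", OF Gne])
  have "g0 * c1 = g0 * c2" using eq[of "-al" 1] G by simp
  then have "g0 \<noteq> 0 \<longrightarrow> c1 = c2" by auto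
  then show ?thesis using G False by (intro exI[of _ g0] exI[of _ 0]) simp
next
  case True
  define A where "A = poly g (1 - al)"
  have G: "poly g s = A * (1 - c2) + A * c2 * (s + al)" for s
  proof -
    have "poly g s = A * (1 + c2 * (s - 1 + al))"
      using eq[of "1-al" "s - 1 + al"] True unfolding A_def by simp
    then show ?thesis by (simp add: algebra_simps)
  qed
  have "poly g (-al) * c2 = 0" using eq[of "-al" 1] True by simp
  then have H: "A * (1 - c2) * c2 = 0" using G[of "-al"] by simp
  show ?thesis
    apply (rule exI[of _ "A * (1 - c2)"], rule exI[of _ "A * c2"])
    using G H True by (auto simp: mult.assoc)
qed




lemma geq_abs: assumes "(G1::complex)*(z+al+Db*l) - (z+al+De*l)*G0 = l/2*(bb*G1 - be*G0)"
  shows "G1*(z+al+(Db-bb/2)*l) = G0*(z+al+(De-be/2)*l)"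
proof -
  have e: "G1*(z+al+(Db-bb/2)*l) - G0*(z+al+(De-be/2)*l) = (G1*(z+al+Db*l) - (z+al+De*l)*G0) - l/2*(bb*G1 - be*G0)"
    by (simp add: algebra_simps diff_divide_distrib)
  show ?thesis using e assms by simp
qed

lemma Y_abs: "(bb::complex) - be = 1 \<Longrightarrow> C = bb * (a0 + a1*(z+l+al)) - be*(a0+a1*(z+al)) \<Longrightarrow> C = a0 + a1*(z+al+bb*l)"
proof -
  assume "bb - be = 1" "C = bb * (a0 + a1*(z+l+al)) - be*(a0+a1*(z+al))"
  then have "C = (bb - be) * a0 + a1 * ((bb - be) * (z + al) + bb * l)" by (simp add: algebra_simps)
  then show ?thesis using \<open>bb - be = 1\<close> by simp
qed

lemma c1_abs: assumes a: "(bb::complex) - be = 1" "Db - bb/2 = De - be/2" shows "De - Db = -1/2"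
proof -
  have "(Db - bb/2)*2 = (De - be/2)*2" using a(2) by simp
  then have "Db*2 - bb = De*2 - be" by (simp add: left_diff_distrib)
  then have h: "(De - Db)*2 = -1" using a(1) by (simp add: algebra_simps)
  have "De - Db = ((De - Db)*2)/2" by simp
  also have "\<dots> = -1/2" using h by simp
  finally show ?thesis .
qed
lemma c2_abs: assumes a: "(bb::complex) - be = 1" "Db - bb/2 = 0" "De - be/2 = 1" shows "(De,Db) = ((bb+1)/2, bb/2)"
proof -
  have "Db = bb/2" using a(2) by simp
  moreover have "De = 1 + be/2" using a(3) by (simp add: algebra_simps)
  moreover have "1 + be/2 = (bb+1)/2" using a(1) by (simp add: field_simps algebra_simps)
  ultimately show ?thesis by simp
qed

lemma CC_evl: "poly (evl (c X) l) z = CC c X l z" by (simp add: CC_def)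

lemma classify:
  assumes hb: "bb - be = 1" and cc: "\<forall>a b l m z. CondPt al bb Db be De c a b l m z"
  shows "\<exists>a0 a1. (\<forall>l z. CC c Y l z = a0 + a1*(z + al + bb*l)) \<and> (a0 \<noteq> 0 \<longrightarrow> De - Db = -1/2)
    \<and> (a1 \<noteq> 0 \<longrightarrow> (De,Db) = ((bb+1)/2, bb/2))
    \<and> (\<forall>X l z. X \<noteq> Y \<longrightarrow> CC c X l z = poly (evl (c N) 0) (z+l) * VC al bb Db X l z - VC al be De X l z * poly (evl (c N) 0) z)"
proof -
  have hM: "CC c M l z = 0" for l z
  proof -
    have "CondPt al bb Db be De c N M 0 l z" using cc by blast
    then have "CC c M l z * bb - be * CC c M l z = 2 * CC c M l z"
      by (simp add: CondPt_def SB_def sv_bracket_def)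
    then show ?thesis using hb by algebra
  qed
  have hN: "CC c N l z = bb * CC c N 0 (z+l) - be * CC c N 0 z" for l z
  proof -
    have "CondPt al bb Db be De c N N l 0 z" using cc by blast
    then show ?thesis using hb
      apply (simp add: CondPt_def SB_def sv_bracket_def)
      by algebra
  qed
  have hL: "CC c L l z = CC c N 0 (z+l) * (z + al + Db * l) - (z + al + De * l) * CC c N 0 z" for l z
  proof -
    have "CondPt al bb Db be De c L N l 0 z" using cc by blast
    then show ?thesis using hb
      apply (simp add: CondPt_def SB_def sv_bracket_def)
      by algebra
  qed
  have hY: "CC c Y l z = bb * CC c Y 0 (z+l) - be * CC c Y 0 z" for l z
  proof -
    have "CondPt al bb Db be De c N Y l 0 z" using cc by blast
    then show ?thesis
      apply (simp add: CondPt_def SB_def sv_bracket_def)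
      by (metis mult.commute)
  qed
  have hLY: "CC c Y 0 (z+l) * (z + al + Db * l) - (z + al + De * l) * CC c Y 0 z = l/2 * CC c Y l z" for l z
  proof -
    have "CondPt al bb Db be De c L Y l 0 z" using cc by blast
    then show ?thesis
      by (simp add: CondPt_def SB_def sv_bracket_def)
  qed
  have geq: "poly (evl (c Y) 0) (z+l) * (z+al+(Db - bb/2)*l) = poly (evl (c Y) 0) z * (z+al+(De - be/2)*l)" for z l
    using geq_abs[OF hLY[where l=l and z=z, unfolded hY[where l=l and z=z]]] unfolding CC_evl by simp
  obtain a0 a1 where G: "\<forall>s. poly (evl (c Y) 0) s = a0 + a1 * (s + al)"
    and c1: "a0 \<noteq> 0 \<longrightarrow> Db - bb/2 = De - be/2" and c2: "a1 \<noteq> 0 \<longrightarrow> Db - bb/2 = 0 \<and> De - be/2 = 1"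
    using G_analysis[OF geq] by blast
  show ?thesis
  proof (intro exI conjI)
    show "\<forall>l z. CC c Y l z = a0 + a1*(z + al + bb*l)"
      proof (intro allI)
      fix l z
      show "CC c Y l z = a0 + a1*(z + al + bb*l)"
        using Y_abs[OF hb, of "CC c Y l z" a0 a1 z l] hY[where l=l and z=z] G unfolding CC_evl by simp
    qed
    show "a0 \<noteq> 0 \<longrightarrow> De - Db = -1/2" using c1 c1_abs[OF hb] by blast
    show "a1 \<noteq> 0 \<longrightarrow> (De,Db) = ((bb+1)/2, bb/2)" using c2 c2_abs[OF hb] by blast
    show "\<forall>X l z. X \<noteq> Y \<longrightarrow> CC c X l z = poly (evl (c N) 0) (z+l) * VC al bb Db X l z - VC al be De X l z * poly (evl (c N) 0) z"
    proof (intro allI impI)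
      fix X l z assume "X \<noteq> Y"
      then show "CC c X l z = poly (evl (c N) 0) (z+l) * VC al bb Db X l z - VC al be De X l z * poly (evl (c N) 0) z"
        unfolding CC_evl using hM[where l=l and z=z] hN[where l=l and z=z] hL[where l=l and z=z] by (cases X) (simp_all add: mult.commute)
    qed
  qed
qed



lemma CC_data_i: "CC (data_i a0) X l z = (if X = Y then a0 else 0)"
  by (simp add: data_i_def CC_def evl_def)

lemma CC_data_ii: "CC (data_ii al bb a1) X l z = (if X = Y then a1*(z+al+bb*l) else 0)"
  by (simp add: data_ii_def CC_def evl_def algebra_simps)

lemma CC_zero: "CC (\<lambda>_. 0) X l z = 0"
  by (simp add: CC_def evl_def)

lemma CC_lin: "CC (\<lambda>X. c1 X - smult [:t:] (c2 X)) X l z = CC c1 X l z - t * CC c2 X l z"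
  by (simp add: CC_def evl_def)

lemma CondPt_lin:
  assumes "CondPt al bb Db be De c1 a b l m z" "CondPt al bb Db be De c2 a b l m z"
  shows "CondPt al bb Db be De (\<lambda>X. c1 X - smult [:t:] (c2 X)) a b l m z"
  using assms unfolding CondPt_def CC_lin by algebra

lemma CondPt_data_i:
  assumes hb: "bb - be = 1" and hd: "De - Db = -1/2"
  shows "CondPt al bb Db be De (data_i a0) a b l m z"
proof -
  have be: "be = bb - 1" using hb by (simp add: algebra_simps)
  have De: "De = Db - 1/2" using hd by (simp add: algebra_simps)
  show ?thesis
    by (cases a; cases b; simp add: CondPt_def SB_def sv_bracket_def CC_data_i be De algebra_simps)
qed

lemma CondPt_data_ii:
  assumes hb: "bb - be = 1" and hd: "(De, Db) = ((bb+1)/2, bb/2)"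
  shows "CondPt al bb Db be De (data_ii al bb a1) a b l m z"
proof -
  have be: "be = bb - 1" using hb by (simp add: algebra_simps)
  have De: "De = (bb+1)/2" and Db: "Db = bb/2" using hd by auto
  show ?thesis
    by (cases a; cases b; simp add: CondPt_def SB_def sv_bracket_def CC_data_ii be De Db algebra_simps add_divide_distrib)
qed



lemma cocycle_data_i: "bb - be = 1 \<Longrightarrow> De - Db = -1/2 \<Longrightarrow> is_cocycle al bb Db be De (data_i a0)"
  using cocycle_iff CondPt_data_i by blast

lemma cocycle_data_ii: "bb - be = 1 \<Longrightarrow> (De, Db) = ((bb+1)/2, bb/2) \<Longrightarrow> is_cocycle al bb Db be De (data_ii al bb a1)"
  using cocycle_iff CondPt_data_ii by blast

lemma cob_Y: "is_coboundary al bb Db be De c \<Longrightarrow> CC c Y l z = 0"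
proof -
  assume "is_coboundary al bb Db be De c"
  then have "Cob al bb Db be De c (\<lambda>_. 0)" unfolding is_coboundary_def using equiv_iff by blast
  then obtain q where "\<And>X l z. CC c X l z - CC (\<lambda>_. 0) X l z =
      poly q (z+l) * VC al bb Db X l z - VC al be De X l z * poly q z" unfolding Cob_def by blast
  from this[of Y l z] show ?thesis by (simp add: CC_zero)
qed

lemma disjoint_cases: "(De::complex) - Db = -1/2 \<Longrightarrow> (De, Db) = ((bb+1)/2, bb/2) \<Longrightarrow> False"
proof -
  assume a: "De - Db = -1/2" "(De, Db) = ((bb+1)/2, (bb::complex)/2)"
  from a(2) have e: "De = (bb+1)/2 \<and> Db = bb/2" by (simp only: prod.inject)
  have "De - Db = (bb+1)/2 - bb/2" by (simp only: e)
  also have "\<dots> = ((bb+1) - bb)/2" by (simp only: diff_divide_distrib)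
  also have "\<dots> = 1/2" by simp
  finally show False using a(1) by simp
qed

lemma equiv_to:
  assumes hb: "bb - be = 1" and cc: "is_cocycle al bb Db be De c"
    and hY: "\<forall>l z. CC c Y l z = CC d Y l z" and hX: "\<forall>X l z. X \<noteq> Y \<longrightarrow> CC d X l z = 0"
  shows "equiv_ext al bb Db be De c d"
proof -
  obtain a0 a1 where cl: "\<forall>X l z. X \<noteq> Y \<longrightarrow> CC c X l z = poly (evl (c N) 0) (z+l) * VC al bb Db X l z - VC al be De X l z * poly (evl (c N) 0) z"
    using classify[OF hb cc[unfolded cocycle_iff]] by blast
  have "Cob al bb Db be De c d"
    unfolding Cob_def
  proof (intro exI allI)
    fix X l z
    show "CC c X l z - CC d X l z = poly (evl (c N) 0) (z+l) * VC al bb Db X l z - VC al be De X l z * poly (evl (c N) 0) z"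
      using cl hX hY by (cases "X = Y") auto
  qed
  then show ?thesis unfolding equiv_ext_def using equiv_iff by blast
qed

lemma nontriv_i: "bb - be = 1 \<Longrightarrow> De - Db = -1/2 \<Longrightarrow> a0 \<noteq> 0 \<Longrightarrow> nontrivial_ext al bb Db be De (data_i a0)"
  unfolding nontrivial_ext_def using cocycle_data_i cob_Y[of al bb Db be De "data_i a0" 0 0]
  by (auto simp: CC_data_i)

lemma nontriv_ii: "bb - be = 1 \<Longrightarrow> (De, Db) = ((bb+1)/2, bb/2) \<Longrightarrow> a1 \<noteq> 0 \<Longrightarrow> nontrivial_ext al bb Db be De (data_ii al bb a1)"
  unfolding nontrivial_ext_def using cocycle_data_ii cob_Y[of al bb Db be De "data_ii al bb a1" 0 "1 - al"]
  by (auto simp: CC_data_ii)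

lemma trivial_if_Y0:
  assumes hb: "bb - be = 1" and cc: "is_cocycle al bb Db be De c" and hY: "\<forall>l z. CC c Y l z = 0"
  shows "is_coboundary al bb Db be De c"
proof -
  have "equiv_ext al bb Db be De c (\<lambda>_. 0)"
    using equiv_to[OF hb cc] hY by (simp add: CC_zero)
  then show ?thesis unfolding is_coboundary_def equiv_ext_def using cc by simp
qed

lemma nontriv_classify:
  assumes hb: "bb - be = 1" and nt: "nontrivial_ext al bb Db be De c"
  shows "\<exists>a0 a1. (\<forall>l z. CC c Y l z = a0 + a1*(z + al + bb*l)) \<and> (a0 \<noteq> 0 \<longrightarrow> De - Db = -1/2)
    \<and> (a1 \<noteq> 0 \<longrightarrow> (De,Db) = ((bb+1)/2, bb/2)) \<and> (a0 \<noteq> 0 \<or> a1 \<noteq> 0)"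
proof -
  have cc: "is_cocycle al bb Db be De c" using nt unfolding nontrivial_ext_def by blast
  obtain a0 a1 where Y: "\<forall>l z. CC c Y l z = a0 + a1*(z + al + bb*l)" and c1: "a0 \<noteq> 0 \<longrightarrow> De - Db = -1/2"
    and c2: "a1 \<noteq> 0 \<longrightarrow> (De,Db) = ((bb+1)/2, bb/2)"
    using classify[OF hb cc[unfolded cocycle_iff]] by blast
  have "a0 \<noteq> 0 \<or> a1 \<noteq> 0"
  proof (rule ccontr)
    assume "\<not> (a0 \<noteq> 0 \<or> a1 \<noteq> 0)"
    then have "\<forall>l z. CC c Y l z = 0" using Y by simp
    then have "is_coboundary al bb Db be De c" using trivial_if_Y0[OF hb cc] by blast
    then show False using nt unfolding nontrivial_ext_def by blast
  qed
  then show ?thesis using Y c1 c2 by blast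
qed

theorem theorem5p8:
  fixes alpha beta betab Delta Deltab :: complex
  assumes "(Delta, beta) \<noteq> (0, 0)"
    and "(Deltab, betab) \<noteq> (0, 0)"
    and "betab - beta = 1"
  shows "((\<exists>c. nontrivial_ext alpha betab Deltab beta Delta c) \<longleftrightarrow>
            (Delta - Deltab = - 1/2 \<or> (Delta, Deltab) = ((betab + 1) / 2, betab / 2)))
       \<and> (Delta - Deltab = - 1/2 \<longrightarrow>
            (\<forall>a0. a0 \<noteq> 0 \<longrightarrow> nontrivial_ext alpha betab Deltab beta Delta (data_i a0)) \<and>
            (\<forall>c. nontrivial_ext alpha betab Deltab beta Delta c \<longrightarrow>
               (\<exists>a0. a0 \<noteq> 0 \<and> equiv_ext alpha betab Deltab beta Delta c (data_i a0))))
       \<and> ((Delta, Deltab) = ((betab + 1) / 2, betab / 2) \<longrightarrow>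
            (\<forall>a1. a1 \<noteq> 0 \<longrightarrow> nontrivial_ext alpha betab Deltab beta Delta (data_ii alpha betab a1)) \<and>
            (\<forall>c. nontrivial_ext alpha betab Deltab beta Delta c \<longrightarrow>
               (\<exists>a1. a1 \<noteq> 0 \<and> equiv_ext alpha betab Deltab beta Delta c (data_ii alpha betab a1))))
       \<and> ((Delta - Deltab = - 1/2 \<or> (Delta, Deltab) = ((betab + 1) / 2, betab / 2)) \<longrightarrow>
            ext_dim_one alpha (beta + 1) Deltab beta Delta)"
proof -
  note hb = assms(3)
  have m1: "- 1/2 = - (1/2::complex)" by simp
  have P1: "(\<exists>c. nontrivial_ext alpha betab Deltab beta Delta c) \<longleftrightarrow>
            (Delta - Deltab = - 1/2 \<or> (Delta, Deltab) = ((betab + 1) / 2, betab / 2))"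
  proof
    assume "\<exists>c. nontrivial_ext alpha betab Deltab beta Delta c"
    then obtain c where "nontrivial_ext alpha betab Deltab beta Delta c" by blast
    from nontriv_classify[OF hb this] show "Delta - Deltab = - 1/2 \<or> (Delta, Deltab) = ((betab + 1) / 2, betab / 2)"
      by auto
  next
    assume "Delta - Deltab = - 1/2 \<or> (Delta, Deltab) = ((betab + 1) / 2, betab / 2)"
    then show "\<exists>c. nontrivial_ext alpha betab Deltab beta Delta c"
      using nontriv_i[OF hb, of Delta Deltab 1 alpha] nontriv_ii[OF hb, of Delta Deltab 1 alpha] by auto
  qed
  have P2: "Delta - Deltab = - 1/2 \<longrightarrow>
            (\<forall>a0. a0 \<noteq> 0 \<longrightarrow> nontrivial_ext alpha betab Deltab beta Delta (data_i a0)) \<and>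
            (\<forall>c. nontrivial_ext alpha betab Deltab beta Delta c \<longrightarrow>
               (\<exists>a0. a0 \<noteq> 0 \<and> equiv_ext alpha betab Deltab beta Delta c (data_i a0)))"
  proof (intro impI conjI allI)
    assume hd: "Delta - Deltab = - 1/2"
    fix a0 :: complex assume "a0 \<noteq> 0"
    then show "nontrivial_ext alpha betab Deltab beta Delta (data_i a0)" using nontriv_i[OF hb hd] by blast
  next
    assume hd: "Delta - Deltab = - 1/2"
    fix c assume nt: "nontrivial_ext alpha betab Deltab beta Delta c"
    obtain a0 a1 where Y: "\<forall>l z. CC c Y l z = a0 + a1*(z + alpha + betab*l)"
      and c2: "a1 \<noteq> 0 \<longrightarrow> (Delta,Deltab) = ((betab+1)/2, betab/2)" and nz: "a0 \<noteq> 0 \<or> a1 \<noteq> 0"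
      using nontriv_classify[OF hb nt] by blast
    have a1: "a1 = 0" using c2 disjoint_cases[OF hd] by blast
    have cc: "is_cocycle alpha betab Deltab beta Delta c" using nt unfolding nontrivial_ext_def by blast
    have "equiv_ext alpha betab Deltab beta Delta c (data_i a0)"
      using equiv_to[OF hb cc] Y a1 by (simp add: CC_data_i)
    then show "\<exists>a0. a0 \<noteq> 0 \<and> equiv_ext alpha betab Deltab beta Delta c (data_i a0)"
      using nz a1 by blast
  qed
  have P3: "(Delta, Deltab) = ((betab + 1) / 2, betab / 2) \<longrightarrow>
            (\<forall>a1. a1 \<noteq> 0 \<longrightarrow> nontrivial_ext alpha betab Deltab beta Delta (data_ii alpha betab a1)) \<and>
            (\<forall>c. nontrivial_ext alpha betab Deltab beta Delta c \<longrightarrow>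
               (\<exists>a1. a1 \<noteq> 0 \<and> equiv_ext alpha betab Deltab beta Delta c (data_ii alpha betab a1)))"
  proof (intro impI conjI allI)
    assume hd: "(Delta, Deltab) = ((betab + 1) / 2, betab / 2)"
    fix a1 :: complex assume "a1 \<noteq> 0"
    then show "nontrivial_ext alpha betab Deltab beta Delta (data_ii alpha betab a1)" using nontriv_ii[OF hb hd] by blast
  next
    assume hd: "(Delta, Deltab) = ((betab + 1) / 2, betab / 2)"
    fix c assume nt: "nontrivial_ext alpha betab Deltab beta Delta c"
    obtain a0 a1 where Y: "\<forall>l z. CC c Y l z = a0 + a1*(z + alpha + betab*l)"
      and c1: "a0 \<noteq> 0 \<longrightarrow> Delta - Deltab = -1/2" and nz: "a0 \<noteq> 0 \<or> a1 \<noteq> 0"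
      using nontriv_classify[OF hb nt] by blast
    have a0: "a0 = 0" using c1 disjoint_cases[OF _ hd] by blast
    have cc: "is_cocycle alpha betab Deltab beta Delta c" using nt unfolding nontrivial_ext_def by blast
    have "equiv_ext alpha betab Deltab beta Delta c (data_ii alpha betab a1)"
      using equiv_to[OF hb cc] Y a0 by (simp add: CC_data_ii)
    then show "\<exists>a1. a1 \<noteq> 0 \<and> equiv_ext alpha betab Deltab beta Delta c (data_ii alpha betab a1)"
      using nz a0 by blast
  qed
  have P4: "(Delta - Deltab = - 1/2 \<or> (Delta, Deltab) = ((betab + 1) / 2, betab / 2)) \<longrightarrow>
            ext_dim_one alpha (beta + 1) Deltab beta Delta"
  proof
    assume cases: "Delta - Deltab = - 1/2 \<or> (Delta, Deltab) = ((betab + 1) / 2, betab / 2)"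
    have bb: "beta + 1 = betab" using hb by (simp add: algebra_simps)
    define c0 where "c0 = (if Delta - Deltab = - 1/2 then data_i 1 else data_ii alpha betab 1)"
    have c0Y: "CC c0 Y l z = (if Delta - Deltab = - 1/2 then 1 else z + alpha + betab * l)" for l z
      by (simp add: c0_def CC_data_i CC_data_ii)
    have c0X: "X \<noteq> Y \<Longrightarrow> CC c0 X l z = 0" for X l z
      by (simp add: c0_def CC_data_i CC_data_ii)
    have c0c: "is_cocycle alpha betab Deltab beta Delta c0"
      using cases cocycle_data_i[OF hb] cocycle_data_ii[OF hb] unfolding c0_def by auto
    have c0n: "\<not> is_coboundary alpha betab Deltab beta Delta c0"
    proof
      assume "is_coboundary alpha betab Deltab beta Delta c0"
      from cob_Y[OF this, of 0 "1 - alpha"] show False by (simp add: c0Y split: if_splits)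
    qed
    have all: "\<exists>t::complex. is_coboundary alpha betab Deltab beta Delta (\<lambda>X. c X - smult [:t:] (c0 X))"
      if cc: "is_cocycle alpha betab Deltab beta Delta c" for c
    proof -
      obtain a0 a1 where Y: "\<forall>l z. CC c Y l z = a0 + a1*(z + alpha + betab*l)"
        and c1: "a0 \<noteq> 0 \<longrightarrow> Delta - Deltab = -1/2" and c2: "a1 \<noteq> 0 \<longrightarrow> (Delta,Deltab) = ((betab+1)/2, betab/2)"
        using classify[OF hb cc[unfolded cocycle_iff]] by blast
      define t where "t = (if Delta - Deltab = - 1/2 then a0 else a1)"
      have zero: "CC c Y l z - t * CC c0 Y l z = 0" for l z
      proof (cases "Delta - Deltab = - 1/2")
        case True
        then have "a1 = 0" using c2 disjoint_cases[OF True] by blast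
        then show ?thesis using True Y by (simp add: t_def c0Y)
      next
        case False
        then have "a0 = 0" using c1 by blast
        then show ?thesis using False Y by (simp add: t_def c0Y)
      qed
      have cc': "is_cocycle alpha betab Deltab beta Delta (\<lambda>X. c X - smult [:t:] (c0 X))"
        unfolding cocycle_iff
      proof (intro allI)
        fix a b l m z
        have "CondPt alpha betab Deltab beta Delta c a b l m z" using cc unfolding cocycle_iff by blast
        moreover have "CondPt alpha betab Deltab beta Delta c0 a b l m z" using c0c unfolding cocycle_iff by blast
        ultimately show "CondPt alpha betab Deltab beta Delta (\<lambda>X. c X - smult [:t:] (c0 X)) a b l m z"
          by (rule CondPt_lin)
      qed
      have "is_coboundary alpha betab Deltab beta Delta (\<lambda>X. c X - smult [:t:] (c0 X))"
        using trivial_if_Y0[OF hb cc'] zero by (simp add: CC_lin)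
      then show ?thesis by blast
    qed
    show "ext_dim_one alpha (beta + 1) Deltab beta Delta"
      unfolding bb ext_dim_one_def using c0c c0n all by blast
  qed
  show ?thesis using P1 P2 P3 P4 by blast
qed


end
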